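(* Let $n$ be an even integer, let $s$ be a positive integer with $s < n/2$, put $k = s$, and let $x$ be an integer with $2s \leq x \leq n-s-1$. Let $d$ be the sequence of length $n$ $$d = (\underbrace{n-1, \ldots, n-1}_{s},\, \underbrace{x, \ldots, x}_{n-2s},\, \underbrace{s, \ldots, s}_{s}).$$ Then $d$ is a $k$-factorable graphic sequence, and no realization of $d$ has a connected $k$-factor.
   Context: A finite sequence of nonnegative integers $d = (d_1, \ldots, d_n)$ is graphic if there is a simple graph on vertices $v_1, \ldots, v_n$ with $\deg(v_i) = d_i$ for all $i$; such a graph is a realization of $d$. A $k$-factor of a graph $G$ is a spanning subgraph of $G$ in which every vertex has degree $k$. A graphic sequence $d$ is $k$-factorable if some realization of $d$ contains a $k$-factor. A connected $k$-factor is a $k$-factor that is a connected graph. *)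

theory Defs
  imports Main
begin

text \<open>A simple graph on the vertex set {0..<n} (vertex i stands for v_(i+1))
  is represented by its edge set: a set of 2-element subsets of {0..<n}.\<close>

definition simple_graph :: "nat \<Rightarrow> nat set set \<Rightarrow> bool" where
  "simple_graph n G \<longleftrightarrow> (\<forall>e\<in>G. e \<subseteq> {0..<n} \<and> card e = 2)"

definition degree :: "nat set set \<Rightarrow> nat \<Rightarrow> nat" where
  "degree G v = card {e\<in>G. v \<in> e}"

definition realization :: "nat list \<Rightarrow> nat set set \<Rightarrow> bool" where
  "realization d G \<longleftrightarrow> simple_graph (length d) G \<and>
     (\<forall>i<length d. degree G i = d ! i)"

definition graphic :: "nat list \<Rightarrow> bool" where
  "graphic d \<longleftrightarrow> (\<exists>G. realization d G)"

definition k_factor :: "nat \<Rightarrow> nat \<Rightarrow> nat set set \<Rightarrow> nat set set \<Rightarrow> bool" where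
  "k_factor n k G H \<longleftrightarrow> H \<subseteq> G \<and> (\<forall>v<n. degree H v = k)"

definition k_factorable :: "nat list \<Rightarrow> nat \<Rightarrow> bool" where
  "k_factorable d k \<longleftrightarrow> graphic d \<and>
     (\<exists>G H. realization d G \<and> k_factor (length d) k G H)"

definition adj :: "nat set set \<Rightarrow> nat \<Rightarrow> nat \<Rightarrow> bool" where
  "adj H u v \<longleftrightarrow> {u, v} \<in> H \<and> u \<noteq> v"

definition connected_graph :: "nat \<Rightarrow> nat set set \<Rightarrow> bool" where
  "connected_graph n H \<longleftrightarrow> (\<forall>u<n. \<forall>v<n. (adj H)\<^sup>*\<^sup>* u v)"

definition connected_k_factor :: "nat \<Rightarrow> nat \<Rightarrow> nat set set \<Rightarrow> nat set set \<Rightarrow> bool" where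
  "connected_k_factor n k G H \<longleftrightarrow> k_factor n k G H \<and> connected_graph n H"

end

theory Submission imports Defs "HOL-Number_Theory.Cong" begin

definition lab :: "nat \<Rightarrow> nat \<Rightarrow> nat \<Rightarrow> nat" where
  "lab p i j = (if i = p then 2*j mod p else if j = p then 2*i mod p else (i+j) mod p)"

lemma lab_sym: "lab p i j = lab p j i"
  unfolding lab_def by (auto simp: add.commute)

lemma odd_cancel2:
  assumes "odd (p::nat)" "a < p" "b < p" "2*a mod p = 2*b mod p" shows "a = b"
proof -
  have "[2*a = 2*b] (mod p)" using assms(4) by (simp add: cong_def)
  moreover have "coprime 2 p" using assms(1) by simp
  ultimately have "[a = b] (mod p)" using cong_mult_lcancel_nat by blast
  thus ?thesis using assms by (simp add: cong_def)
qed

lemma add_cancel_mod: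
  assumes "(a::nat) < p" "b < p" "(v+a) mod p = (v+b) mod p" shows "a = b"
proof -
  have "[v+a = v+b] (mod p)" using assms(3) by (simp add: cong_def)
  hence "[a = b] (mod p)" by (simp add: cong_add_lcancel_nat)
  thus ?thesis using assms by (simp add: cong_def)
qed

lemma lab_inj:
  assumes "odd p" "v \<le> p" shows "inj_on (lab p v) ({0..p} - {v})"
proof (rule inj_onI)
  fix a b assume a: "a \<in> {0..p} - {v}" and b: "b \<in> {0..p} - {v}" and e: "lab p v a = lab p v b"
  show "a = b"
  proof (cases "v = p")
    case True
    then have "a < p" "b < p" using a b by auto
    have "2*a mod p = 2*b mod p" using e True by (simp add: lab_def)
    then show ?thesis using odd_cancel2[OF assms(1) \<open>a < p\<close> \<open>b < p\<close>] by blast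
  next
    case False
    hence vp: "v < p" using assms by simp
    consider "a = p" "b = p" | "a = p" "b < p" | "a < p" "b = p" | "a < p" "b < p" using a b by force
    then show ?thesis
    proof cases
      case 1 then show ?thesis by simp
    next
      case 2
      then have "2*v mod p = (v+b) mod p" using e False by (simp add: lab_def)
      hence "(v+v) mod p = (v+b) mod p" by (simp add: mult_2)
      hence "v = b" using add_cancel_mod vp 2 by blast
      then show ?thesis using b by simp
    next
      case 3
      then have "2*v mod p = (v+a) mod p" using e False by (simp add: lab_def)
      hence "(v+v) mod p = (v+a) mod p" by (simp add: mult_2)
      hence "v = a" using add_cancel_mod vp 3 by blast
      then show ?thesis using a by simp
    next
      case 4
      then have "(v+a) mod p = (v+b) mod p" using e False by (simp add: lab_def)
      then show ?thesis using add_cancel_mod 4 by blast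
    qed
  qed
qed

lemma lab_lt: "0 < p \<Longrightarrow> lab p v j < p"
  unfolding lab_def by simp

lemma lab_bij:
  assumes "odd p" "v \<le> p" shows "bij_betw (lab p v) ({0..p} - {v}) {0..<p}"
proof -
  have i: "inj_on (lab p v) ({0..p} - {v})" by (rule lab_inj[OF assms])
  have p0: "p > 0" using assms(1) by (cases p) auto
  have sub: "lab p v ` ({0..p} - {v}) \<subseteq> {0..<p}" using lab_lt[OF p0] by auto
  have "card ({0..p} - {v}) = p" using assms(2) by simp
  hence "card (lab p v ` ({0..p} - {v})) = p" using card_image[OF i] by simp
  hence "lab p v ` ({0..p} - {v}) = {0..<p}" using sub by (simp add: card_subset_eq)
  thus ?thesis using i by (simp add: bij_betw_def)
qed

lemma lab_count:
  assumes "odd p" "v \<le> p" "r \<le> p"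
  shows "card {j. j \<le> p \<and> j \<noteq> v \<and> lab p v j < r} = r"
proof -
  let ?A = "{j. j \<le> p \<and> j \<noteq> v \<and> lab p v j < r}"
  have b: "bij_betw (lab p v) ({0..p} - {v}) {0..<p}" by (rule lab_bij[OF assms(1,2)])
  have sub: "?A \<subseteq> {0..p} - {v}" by auto
  have i: "inj_on (lab p v) ?A" using inj_on_subset[OF bij_betw_imp_inj_on[OF b] sub] .
  have img: "lab p v ` ({0..p} - {v}) = {0..<p}" using b by (simp add: bij_betw_def)
  have "lab p v ` ?A = {0..<r}"
  proof
    show "lab p v ` ?A \<subseteq> {0..<r}" by auto
    show "{0..<r} \<subseteq> lab p v ` ?A"
    proof
      fix c assume c: "c \<in> {0..<r}"
      then have "c \<in> {0..<p}" using assms(3) by auto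
      then have "c \<in> lab p v ` ({0..p} - {v})" using img by simp
      then obtain j where j: "j \<in> {0..p} - {v}" "c = lab p v j" by (rule imageE)
      then have "j \<in> ?A" using c by simp
      then show "c \<in> lab p v ` ?A" using j(2) by (rule rev_image_eqI)
    qed
  qed
  then show ?thesis using card_image[OF i] by simp
qed

definition mkG :: "nat \<Rightarrow> (nat \<Rightarrow> nat \<Rightarrow> bool) \<Rightarrow> nat set set" where
  "mkG n P = {{i,j} | i j. i<n \<and> j<n \<and> i\<noteq>j \<and> P i j}"

lemma mkG_simple: "simple_graph n (mkG n P)"
  unfolding simple_graph_def mkG_def by auto

lemma mkG_mono: "(\<And>i j. Q i j \<Longrightarrow> P i j) \<Longrightarrow> mkG n Q \<subseteq> mkG n P"
  unfolding mkG_def by blast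

lemma mkG_deg:
  assumes sym: "\<And>i j. P i j = P j i" and v: "v < n"
  shows "degree (mkG n P) v = card {j. j<n \<and> j\<noteq>v \<and> P v j}"
proof -
  have "{e\<in>mkG n P. v \<in> e} = (\<lambda>j. {v,j}) ` {j. j<n \<and> j\<noteq>v \<and> P v j}"
  proof
    show "{e\<in>mkG n P. v \<in> e} \<subseteq> (\<lambda>j. {v,j}) ` {j. j<n \<and> j\<noteq>v \<and> P v j}"
    proof
      fix e assume "e \<in> {e\<in>mkG n P. v \<in> e}"
      then obtain i j where e: "e = {i,j}" "i<n" "j<n" "i\<noteq>j" "P i j" "v \<in> e"
        unfolding mkG_def by blast
      show "e \<in> (\<lambda>j. {v,j}) ` {j. j<n \<and> j\<noteq>v \<and> P v j}"
      proof (cases "v = i")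
        case True then show ?thesis using e by blast
      next
        case False then have "v = j" using e by auto
        then show ?thesis using e sym[of i j] by (auto simp: insert_commute)
      qed
    qed
    show "(\<lambda>j. {v,j}) ` {j. j<n \<and> j\<noteq>v \<and> P v j} \<subseteq> {e\<in>mkG n P. v \<in> e}"
      using v unfolding mkG_def by blast
  qed
  moreover have "inj_on (\<lambda>j. {v,j}) {j. j<n \<and> j\<noteq>v \<and> P v j}"
    by (rule inj_onI) (auto simp: doubleton_eq_iff)
  ultimately show ?thesis unfolding degree_def by (simp add: card_image)
qed

lemma nth_d:
  assumes "i < s + m + s"
  shows "(replicate s a @ replicate m b @ replicate s c) ! i =
    (if i < s then a else if i < s + m then b else c)"
  using assms by (auto simp: nth_append)


lemma no_conn:
  assumes sn: "s < n - s" and s0: "0 < s" and R: "realization d G" and len: "length d = n"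
    and dA: "\<And>i. i < s \<Longrightarrow> d!i = n-1"
    and dC: "\<And>i. n-s \<le> i \<Longrightarrow> i < n \<Longrightarrow> d!i = s"
    and K: "k_factor n s G H"
  shows "\<not> connected_graph n H"
proof
  assume conn: "connected_graph n H"
  have sg: "\<And>e. e \<in> G \<Longrightarrow> e \<subseteq> {0..<n} \<and> card e = 2"
    using R len unfolding realization_def simple_graph_def by auto
  have degG: "\<And>i. i < n \<Longrightarrow> card {e\<in>G. i \<in> e} = d!i"
    using R len unfolding realization_def degree_def by auto
  have HG: "H \<subseteq> G" and degH: "\<And>i. i < n \<Longrightarrow> card {e\<in>H. i \<in> e} = s"
    using K unfolding k_factor_def degree_def by auto
  have finG: "finite G"
  proof -
    have "G \<subseteq> Pow {0..<n}" using sg by auto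
    thus ?thesis using finite_subset by blast
  qed
  have finH: "finite H" using finG HG finite_subset by blast
  have allA: "{a,j} \<in> G" if a: "a < s" and j: "j < n" "j \<noteq> a" for a j
  proof -
    let ?T = "(\<lambda>j. {a,j}) ` ({0..<n} - {a})"
    have sub: "{e\<in>G. a \<in> e} \<subseteq> ?T"
    proof
      fix e assume e: "e \<in> {e\<in>G. a \<in> e}"
      then have "e \<subseteq> {0..<n}" "card e = 2" "a \<in> e" using sg by auto
      then obtain x y where xy: "e = {x,y}" "x \<noteq> y" by (meson card_2_iff)
      show "e \<in> ?T"
      proof (cases "x = a")
        case True then show ?thesis using xy \<open>e \<subseteq> {0..<n}\<close> by auto
      next
        case False then have "y = a" using xy \<open>a \<in> e\<close> by auto
        then show ?thesis using xy \<open>e \<subseteq> {0..<n}\<close> by (auto simp: insert_commute)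
      qed
    qed
    have injT: "inj_on (\<lambda>j. {a,j}) ({0..<n} - {a})"
      by (rule inj_onI) (auto simp: doubleton_eq_iff)
    have an: "a < n" using a sn by linarith
    have "card ?T = n - 1" using card_image[OF injT] an by simp
    moreover have "card {e\<in>G. a \<in> e} = n - 1" using degG[OF an] dA[OF a] by simp
    ultimately have "{e\<in>G. a \<in> e} = ?T" using sub by (simp add: card_subset_eq)
    then show ?thesis using j by auto
  qed
  have HC: "{e\<in>H. c \<in> e} = (\<lambda>a. {a,c}) ` {0..<s}" if c: "n-s \<le> c" "c < n" for c
  proof -
    let ?U = "(\<lambda>a. {a,c}) ` {0..<s}"
    have sub: "?U \<subseteq> {e\<in>G. c \<in> e}" using allA c sn by auto
    have injU: "inj_on (\<lambda>a. {a,c}) {0..<s}"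
      by (rule inj_onI) (auto simp: doubleton_eq_iff)
    have cU: "card ?U = s" using card_image[OF injU] by simp
    have "card {e\<in>G. c \<in> e} = s" using degG[OF c(2)] dC[OF c] by simp
    moreover have "finite {e\<in>G. c \<in> e}" using finG by simp
    ultimately have eqG: "?U = {e\<in>G. c \<in> e}" using sub cU card_subset_eq by metis
    have "{e\<in>H. c \<in> e} \<subseteq> ?U" using eqG HG by auto
    moreover have "card {e\<in>H. c \<in> e} = s" using degH c by simp
    ultimately show ?thesis using cU card_subset_eq finite_imageI finite_atLeastLessThan by metis
  qed
  have HA: "{e\<in>H. a \<in> e} = (\<lambda>c. {a,c}) ` {n-s..<n}" if a: "a < s" for a
  proof -
    let ?V = "(\<lambda>c. {a,c}) ` {n-s..<n}"
    have sub: "?V \<subseteq> {e\<in>H. a \<in> e}"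
    proof
      fix e assume "e \<in> ?V"
      then obtain c where c: "n-s \<le> c" "c < n" "e = {a,c}" by auto
      then have "e \<in> {e\<in>H. c \<in> e}" using HC[OF c(1,2)] a by auto
      then show "e \<in> {e\<in>H. a \<in> e}" using c by auto
    qed
    have injV: "inj_on (\<lambda>c. {a,c}) {n-s..<n}"
      by (rule inj_onI) (auto simp: doubleton_eq_iff)
    have cV: "card ?V = s" using card_image[OF injV] sn by simp
    have an: "a < n" using a sn by linarith
    have "card {e\<in>H. a \<in> e} = s" using degH[OF an] by simp
    moreover have "finite {e\<in>H. a \<in> e}" using finH by simp
    ultimately show ?thesis using sub cV card_subset_eq by metis
  qed
  define S where "S = {0..<s} \<union> {n-s..<n}"
  have step: "v \<in> S" if "adj H u v" "u \<in> S" for u v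
  proof -
    have uv: "{u,v} \<in> H" "u \<noteq> v" using that(1) unfolding adj_def by auto
    show ?thesis
    proof (cases "u < s")
      case True
      then have "{u,v} \<in> (\<lambda>c. {u,c}) ` {n-s..<n}" using HA[OF True] uv by auto
      then obtain c where "c \<in> {n-s..<n}" "{u,v} = {u,c}" by auto
      then show ?thesis using uv unfolding S_def by (auto simp: doubleton_eq_iff)
    next
      case False
      then have c: "n-s \<le> u" "u < n" using that(2) unfolding S_def by auto
      then have "{u,v} \<in> (\<lambda>a. {a,u}) ` {0..<s}" using HC[OF c] uv by auto
      then obtain a where "a \<in> {0..<s}" "{u,v} = {a,u}" by auto
      then show ?thesis using uv unfolding S_def by (auto simp: doubleton_eq_iff)
    qed
  qed
  have reach: "(adj H)\<^sup>*\<^sup>* u v \<Longrightarrow> u \<in> S \<Longrightarrow> v \<in> S" for u v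
    by (induction rule: rtranclp_induct) (auto intro: step)
  have "(adj H)\<^sup>*\<^sup>* 0 s" using conn sn s0 unfolding connected_graph_def by auto
  moreover have "(0::nat) \<in> S" using s0 unfolding S_def by auto
  ultimately have "s \<in> S" using reach by blast
  then show False using sn unfolding S_def by auto
qed


lemma mid_count:
  assumes "odd p" "s \<le> v" "v < s + p + 1" "r \<le> p"
  shows "card {j. j < s + p + 1 + s \<and> j \<noteq> v \<and> (s \<le> j \<and> j < s + p + 1 \<and> lab p (v-s) (j-s) < r)} = r"
proof -
  have "{j. j < s + p + 1 + s \<and> j \<noteq> v \<and> (s \<le> j \<and> j < s + p + 1 \<and> lab p (v-s) (j-s) < r)}
      = (\<lambda>j. j + s) ` {j. j \<le> p \<and> j \<noteq> v - s \<and> lab p (v-s) j < r}"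
  proof (rule set_eqI, rule iffI)
    fix j assume "j \<in> {j. j < s + p + 1 + s \<and> j \<noteq> v \<and> (s \<le> j \<and> j < s + p + 1 \<and> lab p (v-s) (j-s) < r)}"
    then have "j - s \<in> {j. j \<le> p \<and> j \<noteq> v - s \<and> lab p (v-s) j < r}" "j = (j - s) + s"
      using assms by auto
    then show "j \<in> (\<lambda>j. j + s) ` {j. j \<le> p \<and> j \<noteq> v - s \<and> lab p (v-s) j < r}" by blast
  next
    fix j assume "j \<in> (\<lambda>j. j + s) ` {j. j \<le> p \<and> j \<noteq> v - s \<and> lab p (v-s) j < r}"
    then show "j \<in> {j. j < s + p + 1 + s \<and> j \<noteq> v \<and> (s \<le> j \<and> j < s + p + 1 \<and> lab p (v-s) (j-s) < r)}"
      using assms by auto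
  qed
  moreover have "inj_on (\<lambda>j. j + s) A" for A by (rule inj_onI) auto
  ultimately show ?thesis using lab_count[of p "v-s" r] assms by (simp add: card_image)
qed

theorem claim2:
  fixes n s k x :: nat
  assumes "even n" and "0 < s" and "2 * s < n" and "k = s"
    and "2 * s \<le> x" and "x \<le> n - s - 1"
  defines "d \<equiv> replicate s (n - 1) @ replicate (n - 2 * s) x @ replicate s s"
  shows "graphic d \<and> k_factorable d k \<and>
         (\<forall>G. realization d G \<longrightarrow> \<not> (\<exists>H. connected_k_factor n k G H))"
proof -
  define p where "p = n - 2 * s - 1"
  have np: "n = s + p + 1 + s" and op: "odd p" using assms(1,3) unfolding p_def
    by (auto elim!: evenE)
  have len: "length d = n" unfolding d_def using assms(3) by simp
  have dn: "d ! i = (if i < s then n - 1 else if i < s + p + 1 then x else s)" if "i < n" for i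
  proof -
    have m: "n - 2*s = p + 1" using np by linarith
    have "i < s + (p+1) + s" using that np by linarith
    from nth_d[OF this, of "n-1" x s] show ?thesis unfolding d_def m by simp
  qed
  define Pg where "Pg i j = (i < s \<or> j < s \<or> (s \<le> i \<and> i < s+p+1 \<and> s \<le> j \<and> j < s+p+1 \<and> lab p (i-s) (j-s) < x - s))" for i j
  define Ph where "Ph i j = ((i < s \<and> s+p+1 \<le> j) \<or> (j < s \<and> s+p+1 \<le> i) \<or> (s \<le> i \<and> i < s+p+1 \<and> s \<le> j \<and> j < s+p+1 \<and> lab p (i-s) (j-s) < s))" for i j
  have symg: "Pg i j = Pg j i" for i j unfolding Pg_def using lab_sym by metis
  have symh: "Ph i j = Ph j i" for i j unfolding Ph_def using lab_sym by metis
  have xsp: "x - s \<le> p" using assms(6) np by linarith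
  have sp: "s \<le> p" using assms(5,6) np by linarith
  have degg: "degree (mkG n Pg) v = d ! v" if v: "v < n" for v
  proof -
    have D: "degree (mkG n Pg) v = card {j. j<n \<and> j\<noteq>v \<and> Pg v j}" by (rule mkG_deg[OF symg v])
    consider "v < s" | "s \<le> v" "v < s+p+1" | "s+p+1 \<le> v" by linarith
    then show ?thesis
    proof cases
      case 1
      then have "{j. j<n \<and> j\<noteq>v \<and> Pg v j} = {0..<n} - {v}" unfolding Pg_def by auto
      then show ?thesis using D 1 dn v by simp
    next
      case 2
      then have "{j. j<n \<and> j\<noteq>v \<and> Pg v j} = {0..<s} \<union>
         {j. j < s + p + 1 + s \<and> j \<noteq> v \<and> (s \<le> j \<and> j < s + p + 1 \<and> lab p (v-s) (j-s) < x - s)}"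
        unfolding Pg_def np by auto
      moreover have "card {j. j < s + p + 1 + s \<and> j \<noteq> v \<and> (s \<le> j \<and> j < s + p + 1 \<and> lab p (v-s) (j-s) < x - s)} = x - s"
        using mid_count[OF op 2 xsp] .
      moreover have "{0..<s} \<inter> {j. j < s + p + 1 + s \<and> j \<noteq> v \<and> (s \<le> j \<and> j < s + p + 1 \<and> lab p (v-s) (j-s) < x - s)} = {}" by auto
      ultimately have "card {j. j<n \<and> j\<noteq>v \<and> Pg v j} = s + (x - s)"
        by (simp add: card_Un_disjoint)
      then show ?thesis using D 2 dn v assms(5) by simp
    next
      case 3
      then have "{j. j<n \<and> j\<noteq>v \<and> Pg v j} = {0..<s}" unfolding Pg_def using np by auto
      then show ?thesis using D 3 dn v by simp
    qed
  qed
  have degh: "degree (mkG n Ph) v = s" if v: "v < n" for v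
  proof -
    have D: "degree (mkG n Ph) v = card {j. j<n \<and> j\<noteq>v \<and> Ph v j}" by (rule mkG_deg[OF symh v])
    consider "v < s" | "s \<le> v" "v < s+p+1" | "s+p+1 \<le> v" by linarith
    then show ?thesis
    proof cases
      case 1
      then have "{j. j<n \<and> j\<noteq>v \<and> Ph v j} = {s+p+1..<n}" unfolding Ph_def by auto
      then show ?thesis using D np by simp
    next
      case 2
      then have "{j. j<n \<and> j\<noteq>v \<and> Ph v j} =
         {j. j < s + p + 1 + s \<and> j \<noteq> v \<and> (s \<le> j \<and> j < s + p + 1 \<and> lab p (v-s) (j-s) < s)}"
        unfolding Ph_def np by auto
      then show ?thesis using D mid_count[OF op 2 sp] by simp
    next
      case 3
      then have "{j. j<n \<and> j\<noteq>v \<and> Ph v j} = {0..<s}" unfolding Ph_def using np by auto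
      then show ?thesis using D by simp
    qed
  qed
  have real: "realization d (mkG n Pg)"
    unfolding realization_def using mkG_simple degg len by simp
  have kf: "k_factor n k (mkG n Pg) (mkG n Ph)"
    unfolding k_factor_def using degh assms(4,5)
    by (auto intro!: mkG_mono simp: Pg_def Ph_def)
  have part3: "\<not> (\<exists>H. connected_k_factor n k G H)" if R: "realization d G" for G
  proof
    assume "\<exists>H. connected_k_factor n k G H"
    then obtain H where "k_factor n s G H" "connected_graph n H"
      unfolding connected_k_factor_def using assms(4) by auto
    moreover have "\<not> connected_graph n H"
    proof (rule no_conn[OF _ assms(2) R len _ _ \<open>k_factor n s G H\<close>])
      show "s < n - s" using assms(3) by linarith
      show "d ! i = n - 1" if "i < s" for i using dn[of i] that np by simp
      show "d ! i = s" if "n - s \<le> i" "i < n" for i using dn[of i] that np by simp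
    qed
    ultimately show False by simp
  qed
  have "graphic d" unfolding graphic_def using real by blast
  moreover have "k_factorable d k" unfolding k_factorable_def using real kf len \<open>graphic d\<close> by auto
  ultimately show ?thesis using part3 by blast
qed

end
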